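(* Let $A$ be a distributive meet-complemented lattice in which $\Box x$ and $\Diamond x$ exist for every $x\in A$. Then for all $a,b\in A$: (D1) $\Diamond a\wedge\Box b\le\Diamond(a\wedge b)$ and (D2) $\Box(a\vee b)\le\Box a\vee\Diamond b$.
   Context: A meet-complemented lattice is a lattice $(L,\le)$ such that for every $a\in L$ the element $\neg a=\max\{b\in L: a\wedge b\le c\ \text{for all } c\in L\}$ exists; it is bounded with bottom $0$ and top $1$. For $a\in L$, $\Box a=\max\{b\in L: a\vee\neg b=1\}$ and $\Diamond a=\min\{b\in L: \neg a\vee b=1\}$. *)

theory Defs
  imports Main
begin

definition is_greatest :: "'a::order set \<Rightarrow> 'a \<Rightarrow> bool" where
  "is_greatest S m \<longleftrightarrow> m \<in> S \<and> (\<forall>x\<in>S. x \<le> m)"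

definition is_least :: "'a::order set \<Rightarrow> 'a \<Rightarrow> bool" where
  "is_least S m \<longleftrightarrow> m \<in> S \<and> (\<forall>x\<in>S. m \<le> x)"

definition mc_set :: "'a::lattice \<Rightarrow> 'a set" where
  "mc_set a = {b. \<forall>c. inf a b \<le> c}"

definition meet_complemented :: "'a::lattice itself \<Rightarrow> bool" where
  "meet_complemented _ \<longleftrightarrow> (\<forall>a::'a. \<exists>m. is_greatest (mc_set a) m)"

definition mneg :: "'a::lattice \<Rightarrow> 'a" where
  "mneg a = (THE m. is_greatest (mc_set a) m)"

definition box_set :: "'a::bounded_lattice \<Rightarrow> 'a set" where
  "box_set a = {b. sup a (mneg b) = top}"

definition dia_set :: "'a::bounded_lattice \<Rightarrow> 'a set" where
  "dia_set a = {b. sup (mneg a) b = top}"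

definition mbox :: "'a::bounded_lattice \<Rightarrow> 'a" where
  "mbox a = (THE m. is_greatest (box_set a) m)"

definition mdia :: "'a::bounded_lattice \<Rightarrow> 'a" where
  "mdia a = (THE m. is_least (dia_set a) m)"

end

theory Submission
  imports Defs
begin

lemma greatest_the: "\<exists>m. is_greatest S m \<Longrightarrow> is_greatest S (THE m. is_greatest S m)"
  by (rule theI') (auto simp: is_greatest_def intro: order.antisym)

lemma least_the: "\<exists>m. is_least S m \<Longrightarrow> is_least S (THE m. is_least S m)"
  by (rule theI') (auto simp: is_least_def intro: order.antisym)

lemma mneg_iff:
  fixes a x :: "'a::{distrib_lattice, bounded_lattice}"
  assumes "meet_complemented TYPE('a)"
  shows "x \<le> mneg a \<longleftrightarrow> inf a x = bot"
proof -
  have "is_greatest (mc_set a) (mneg a)"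
    using assms unfolding meet_complemented_def mneg_def by (blast intro: greatest_the)
  hence h: "\<forall>c. inf a (mneg a) \<le> c" "\<And>y. (\<forall>c. inf a y \<le> c) \<Longrightarrow> y \<le> mneg a"
    by (auto simp: is_greatest_def mc_set_def)
  show ?thesis
  proof
    assume "x \<le> mneg a"
    hence "inf a x \<le> inf a (mneg a)" by (simp add: inf.coboundedI2)
    thus "inf a x = bot" using h(1) by (metis bot_unique order_trans)
  next
    assume "inf a x = bot" thus "x \<le> mneg a" using h(2) by simp
  qed
qed

theorem proposition15:
  fixes a b :: "'a::{distrib_lattice, bounded_lattice}"
  assumes "meet_complemented TYPE('a)"
    and "\<forall>x::'a. \<exists>m. is_greatest (box_set x) m"
    and "\<forall>x::'a. \<exists>m. is_least (dia_set x) m"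
  shows "inf (mdia a) (mbox b) \<le> mdia (inf a b) \<and>
         mbox (sup a b) \<le> sup (mbox a) (mdia b)"
proof -
  note N = mneg_iff[OF assms(1)]
  have B: "is_greatest (box_set x) (mbox x)" for x :: 'a
    using assms(2) unfolding mbox_def by (blast intro: greatest_the)
  have D: "is_least (dia_set x) (mdia x)" for x :: 'a
    using assms(3) unfolding mdia_def by (blast intro: least_the)
  have B1: "sup x (mneg (mbox x)) = top" for x :: 'a
    using B[of x] by (simp add: is_greatest_def box_set_def)
  have B2: "sup x (mneg y) = top \<Longrightarrow> y \<le> mbox x" for x y :: 'a
    using B[of x] by (simp add: is_greatest_def box_set_def)
  have D1: "sup (mneg x) (mdia x) = top" for x :: 'a
    using D[of x] by (simp add: is_least_def dia_set_def)
  have D2: "sup (mneg x) y = top \<Longrightarrow> mdia x \<le> y" for x y :: 'a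
    using D[of x] by (simp add: is_least_def dia_set_def)
  have cancel: "inf x (mneg x) = bot" for x :: 'a using N by blast
  have part1: "inf (mdia a) (mbox b) \<le> mdia (inf a b)"
  proof -
    define d where "d = mdia (inf a b)"
    define be where "be = mbox b"
    have e1: "sup (mneg (inf a b)) d = top" using D1 d_def by simp
    have e2: "sup b (mneg be) = top" using B1 be_def by simp
    have "inf a (inf (mneg (inf a b)) b) = inf (inf a b) (mneg (inf a b))" by (simp add: ac_simps)
    hence k: "inf (mneg (inf a b)) b \<le> mneg a" using N cancel by simp
    have "top = inf (sup (mneg (inf a b)) d) (sup b (mneg be))" using e1 e2 by simp
    also have "\<dots> \<le> sup (inf (mneg (inf a b)) b) (sup d (mneg be))"
      unfolding inf_sup_distrib1 inf_sup_distrib2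
      by (intro sup_least) (auto intro: le_supI1 le_supI2 inf.coboundedI1 inf.coboundedI2)
    also have "\<dots> \<le> sup (mneg a) (sup d (mneg be))" using k by (rule sup_mono) simp
    finally have "sup (mneg a) (sup d (mneg be)) = top" by (simp add: top_unique)
    hence "mdia a \<le> sup d (mneg be)" by (rule D2)
    hence "inf (mdia a) be \<le> inf (sup d (mneg be)) be" by (rule inf_mono) simp
    also have "\<dots> = sup (inf d be) (inf (mneg be) be)" by (simp add: inf_sup_distrib2)
    also have "\<dots> \<le> d" using cancel[of be] by (simp add: inf_commute le_infI1)
    finally show ?thesis using d_def be_def by simp
  qed
  have part2: "mbox (sup a b) \<le> sup (mbox a) (mdia b)"
  proof -
    define g where "g = mbox (sup a b)"
    define de where "de = mdia b"
    have e1: "sup (sup a b) (mneg g) = top" using B1 g_def by simp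
    have e2: "sup (mneg b) de = top" using D1 de_def by simp
    have "inf (inf g (mneg b)) (mneg g) = inf (inf g (mneg g)) (mneg b)" by (simp add: ac_simps)
    hence k1: "mneg g \<le> mneg (inf g (mneg b))" using N cancel by simp
    have "inf (inf g (mneg b)) b = inf g (inf b (mneg b))" by (simp add: ac_simps)
    hence k2: "b \<le> mneg (inf g (mneg b))" using N cancel by simp
    have "top = sup (sup a b) (mneg g)" using e1 by simp
    also have "\<dots> \<le> sup a (mneg (inf g (mneg b)))"
      using k1 k2 by (intro sup_least) (auto intro: le_supI2)
    finally have "top \<le> sup a (mneg (inf g (mneg b)))" .
    hence "sup a (mneg (inf g (mneg b))) = top" by (simp add: top_unique)
    hence x: "inf g (mneg b) \<le> mbox a" by (rule B2)
    have "g = inf g (sup (mneg b) de)" using e2 by simp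
    also have "\<dots> = sup (inf g (mneg b)) (inf g de)" by (simp add: inf_sup_distrib1)
    also have "\<dots> \<le> sup (mbox a) de" using x by (rule sup_mono) simp
    finally show ?thesis using g_def de_def by simp
  qed
  show ?thesis using part1 part2 by simp
qed

end
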